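(* Let $W$ be an $\epsilon$-spectral cluster of $G_0$, let $V\subseteq V_0$ be closed in $G_0$, let $G=G_0|V$, and let $S\subseteq V$ be closed in $G$ and dominate $W$. Suppose $v\in S$ has $d_G(v)>0$ and at least $\frac59 d_G(v)$ of its $G$-neighbors in $V\setminus S$. Then $S\setminus\{v\}$ is closed in $G$ and dominates $W$. Consequently, performing any sequence of such moves (local improvements of $V\setminus S$) preserves that $S$ is closed in $G$ and dominates $W$.
   Context: Standing setting: $G_0=(V_0,E_0)$ is a finite simple undirected graph and $0<\epsilon\le 1/2000000$. For a graph $H$, $d_H(v)$ is the degree, $\mathrm{vol}_H(S)=\sum_{v\in S}d_H(v)$, $E(S,T)$ is the set of edges with one endpoint in $S$ and the other in $T$, $\partial_H S=E(S,V(H)\setminus S)$. For $V\subseteq V_0$, $G_0|V$ is the induced subgraph. An $\epsilon$-spectral cluster of $G_0$ is $W\subseteq V_0$ with $\mathrm{vol}_{G_0}(W)>0$, $|\partial_{G_0}W|\le\epsilon\,\mathrm{vol}_{G_0}(W)$, and for every $A\subseteq W$ with $r=\mathrm{vol}_{G_0}(A)/\mathrm{vol}_{G_0}(W)$, $|E(A,W\setminus A)|\ge(r(1-r)-\epsilon)\mathrm{vol}_{G_0}(W)$. A set $A\subseteq V(H)$ is closed in $H$ if no $v\in V(H)\setminus A$ with $d_H(v)>0$ has at least $\frac59 d_H(v)$ of its $H$-neighbors in $A$. A set $A\subseteq V_0$ dominates $W$ if $\mathrm{vol}_{G_0}(W\cap A)>(1-3\epsilon)\mathrm{vol}_{G_0}(W)$.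 *)

theory Defs
  imports Complex_Main
begin

text \<open>Induced subgraphs G0|U are represented by the vertex set U (edges: those of Adj
with both endpoints in U).\<close>

definition simple_graph :: "'a set \<Rightarrow> ('a \<Rightarrow> 'a \<Rightarrow> bool) \<Rightarrow> bool" where
  "simple_graph V0 Adj \<longleftrightarrow> finite V0 \<and> (\<forall>u v. Adj u v \<longrightarrow> Adj v u)
     \<and> (\<forall>u. \<not> Adj u u) \<and> (\<forall>u v. Adj u v \<longrightarrow> u \<in> V0 \<and> v \<in> V0)"

definition nbrs :: "('a \<Rightarrow> 'a \<Rightarrow> bool) \<Rightarrow> 'a set \<Rightarrow> 'a \<Rightarrow> 'a set" where
  "nbrs Adj U v = {u \<in> U. Adj v u}"

definition deg :: "('a \<Rightarrow> 'a \<Rightarrow> bool) \<Rightarrow> 'a set \<Rightarrow> 'a \<Rightarrow> nat" where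
  "deg Adj U v = card (nbrs Adj U v)"

definition vol :: "('a \<Rightarrow> 'a \<Rightarrow> bool) \<Rightarrow> 'a set \<Rightarrow> 'a set \<Rightarrow> nat" where
  "vol Adj U S = (\<Sum>v\<in>S. deg Adj U v)"

definition edges_between :: "('a \<Rightarrow> 'a \<Rightarrow> bool) \<Rightarrow> 'a set \<Rightarrow> 'a set \<Rightarrow> 'a set set" where
  "edges_between Adj S T = {{u, w} | u w. u \<in> S \<and> w \<in> T \<and> Adj u w}"

definition spectral_cluster :: "'a set \<Rightarrow> ('a \<Rightarrow> 'a \<Rightarrow> bool) \<Rightarrow> real \<Rightarrow> 'a set \<Rightarrow> bool" where
  "spectral_cluster V0 Adj \<epsilon> W \<longleftrightarrow> W \<subseteq> V0 \<and> vol Adj V0 W > 0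
     \<and> real (card (edges_between Adj W (V0 - W))) \<le> \<epsilon> * real (vol Adj V0 W)
     \<and> (\<forall>A\<subseteq>W. let r = real (vol Adj V0 A) / real (vol Adj V0 W) in
          real (card (edges_between Adj A (W - A))) \<ge> (r * (1 - r) - \<epsilon>) * real (vol Adj V0 W))"

definition closed_in_graph :: "('a \<Rightarrow> 'a \<Rightarrow> bool) \<Rightarrow> 'a set \<Rightarrow> 'a set \<Rightarrow> bool" where
  "closed_in_graph Adj U A \<longleftrightarrow> A \<subseteq> U \<and>
     (\<forall>v \<in> U - A. deg Adj U v > 0 \<longrightarrow>
        \<not> (real (card (nbrs Adj U v \<inter> A)) \<ge> 5/9 * real (deg Adj U v)))"

definition dominates :: "'a set \<Rightarrow> ('a \<Rightarrow> 'a \<Rightarrow> bool) \<Rightarrow> real \<Rightarrow> 'a set \<Rightarrow> 'a set \<Rightarrow> bool" where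
  "dominates V0 Adj \<epsilon> A W \<longleftrightarrow>
     real (vol Adj V0 (W \<inter> A)) > (1 - 3 * \<epsilon>) * real (vol Adj V0 W)"

definition improve_move :: "('a \<Rightarrow> 'a \<Rightarrow> bool) \<Rightarrow> 'a set \<Rightarrow> 'a set \<Rightarrow> 'a set \<Rightarrow> bool" where
  "improve_move Adj V S S' \<longleftrightarrow> (\<exists>v \<in> S. deg Adj V v > 0 \<and>
      real (card (nbrs Adj V v \<inter> (V - S))) \<ge> 5/9 * real (deg Adj V v) \<and> S' = S - {v})"

end

theory Submission
  imports Defs
begin


lemma nbrs_sub: "simple_graph V0 Adj \<Longrightarrow> nbrs Adj U v \<subseteq> V0"
  unfolding simple_graph_def nbrs_def by auto

lemma fin_nbrs: "simple_graph V0 Adj \<Longrightarrow> finite (nbrs Adj U v)"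
  using nbrs_sub[of V0 Adj U v] unfolding simple_graph_def by (meson finite_subset)

lemma nbrs_V: "V \<subseteq> V0 \<Longrightarrow> nbrs Adj V u = nbrs Adj V0 u \<inter> V"
  unfolding nbrs_def by auto

lemma closed_out:
  assumes g: "simple_graph V0 Adj" and VV: "V \<subseteq> V0"
    and cV: "closed_in_graph Adj V0 V" and cT: "closed_in_graph Adj V T"
    and u: "u \<in> V0 - T"
  shows "4/9 * real (deg Adj V0 u) \<le> real (card (nbrs Adj V0 u - T))"
proof -
  define N where "N = nbrs Adj V0 u"
  have fN: "finite N" using fin_nbrs[OF g] N_def by auto
  have TV: "T \<subseteq> V" using cT unfolding closed_in_graph_def by auto
  have e1: "N - T = (N \<inter> V - T) \<union> (N - V)" using TV by auto
  have c1: "card (N - T) = card (N \<inter> V - T) + card (N - V)"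
    unfolding e1 by (rule card_Un_disjoint) (use fN in auto)
  have c2: "card N = card (N \<inter> V) + card (N - V)" using card_Int_Diff[OF fN] by simp
  have c3: "card (N \<inter> V) = card (N \<inter> V \<inter> T) + card (N \<inter> V - T)"
    using card_Int_Diff[of "N \<inter> V" T] fN by simp
  have dN: "deg Adj V0 u = card N" unfolding deg_def N_def by simp
  have main: "4/9 * real (card N) \<le> real (card (N - T))"
  proof (cases "u \<in> V")
    case True
    have dV: "deg Adj V u = card (N \<inter> V)" unfolding deg_def N_def using nbrs_V[OF VV] by simp
    show ?thesis
    proof (cases "card (N \<inter> V) > 0")
      case True
      have "\<not> 5/9 * real (deg Adj V u) \<le> real (card (nbrs Adj V u \<inter> T))"
      proof -
        have "u \<in> V - T" using \<open>u \<in> V\<close> u by auto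
        moreover have "deg Adj V u > 0" using True dV by simp
        ultimately show ?thesis using cT unfolding closed_in_graph_def by blast
      qed
      moreover have "nbrs Adj V u \<inter> T = N \<inter> V \<inter> T" using nbrs_V[OF VV] N_def by auto
      ultimately have "real (card (N \<inter> V \<inter> T)) < 5/9 * real (card (N \<inter> V))" using dV by auto
      then show ?thesis using c1 c2 c3 by simp
    next
      case False
      then show ?thesis using c1 c2 c3 by simp
    qed
  next
    case False
    show ?thesis
    proof (cases "card N > 0")
      case True
      have "\<not> 5/9 * real (deg Adj V0 u) \<le> real (card (nbrs Adj V0 u \<inter> V))"
      proof -
        have "u \<in> V0 - V" using False u by auto
        moreover have "deg Adj V0 u > 0" using True dN by simp
        ultimately show ?thesis using cV unfolding closed_in_graph_def by blast
      qed
      then have "real (card (N \<inter> V)) < 5/9 * real (card N)" using dN N_def by simp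
      then show ?thesis using c1 c2 c3 by simp
    next
      case False
      then show ?thesis using dN by simp
    qed
  qed
  then show ?thesis using dN N_def by simp
qed



lemma cut_sum:
  assumes g: "simple_graph V0 Adj" and BW: "B \<subseteq> W" and W0: "W \<subseteq> V0"
  shows "card (edges_between Adj B (W - B)) \<le> (\<Sum>u\<in>B. card (nbrs Adj V0 u \<inter> (W - B)))"
proof -
  have fV: "finite V0" using g unfolding simple_graph_def by auto
  have fB: "finite B" using finite_subset[OF BW finite_subset[OF W0 fV]] .
  have e: "edges_between Adj B (W - B) = (\<lambda>(u,w). {u,w}) ` (SIGMA u:B. nbrs Adj V0 u \<inter> (W - B))"
    unfolding edges_between_def nbrs_def using W0 by auto
  have "card (edges_between Adj B (W - B)) \<le> card (SIGMA u:B. nbrs Adj V0 u \<inter> (W - B))"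
    unfolding e by (rule card_image_le) (use fB fin_nbrs[OF g] in auto)
  also have "\<dots> = (\<Sum>u\<in>B. card (nbrs Adj V0 u \<inter> (W - B)))"
    by (rule card_SigmaI) (use fB fin_nbrs[OF g] in auto)
  finally show ?thesis .
qed

lemma fin: fixes x Wv e P Q E :: real
 assumes a: "4/9 * x \<le> Q" and b: "E \<le> P" and xs: "x = P + Q" and cut: "E \<ge> (x/Wv * (1 - x/Wv) - e) * Wv"
  and cutv: "(x/Wv * (1 - x/Wv) - e) * Wv = x - x^2/Wv - e * Wv"
  shows "4/9 * x \<le> x^2/Wv + e * Wv"
    using a b xs cut cutv by linarith

lemma dichotomy:
  assumes g: "simple_graph V0 Adj" and VV: "V \<subseteq> V0"
    and cV: "closed_in_graph Adj V0 V" and cT: "closed_in_graph Adj V T"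
    and cl: "spectral_cluster V0 Adj \<epsilon> W"
  shows "4/9 * real (vol Adj V0 (W - T)) \<le> real (vol Adj V0 (W - T))^2 / real (vol Adj V0 W) + \<epsilon> * real (vol Adj V0 W)"
proof -
  define B where "B = W - T"
  define x where "x = real (vol Adj V0 B)"
  define Wv where "Wv = real (vol Adj V0 W)"
  define N where "N = nbrs Adj V0"
  have W0: "W \<subseteq> V0" and Wp: "Wv > 0" using cl unfolding spectral_cluster_def Wv_def by auto
  have fV: "finite V0" using g unfolding simple_graph_def by auto
  have fW: "finite W" using finite_subset[OF W0 fV] .
  have BW: "B \<subseteq> W" unfolding B_def by auto
  have fB: "finite B" using finite_subset[OF BW fW] .
  have fN: "\<And>u. finite (N u)" using fin_nbrs[OF g] N_def by auto
  have cut: "real (card (edges_between Adj B (W - B))) \<ge> (x/Wv * (1 - x/Wv) - \<epsilon>) * Wv"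
  proof -
    have "\<forall>A\<subseteq>W. let r = real (vol Adj V0 A) / real (vol Adj V0 W) in
          real (card (edges_between Adj A (W - A))) \<ge> (r * (1 - r) - \<epsilon>) * real (vol Adj V0 W)"
      using cl unfolding spectral_cluster_def by (elim conjE)
    then have "let r = real (vol Adj V0 B) / real (vol Adj V0 W) in
          real (card (edges_between Adj B (W - B))) \<ge> (r * (1 - r) - \<epsilon>) * real (vol Adj V0 W)"
      using BW by (elim allE[of _ B]) simp
    then show ?thesis unfolding Let_def x_def Wv_def .
  qed
  have cutv: "(x/Wv * (1 - x/Wv) - \<epsilon>) * Wv = x - x^2/Wv - \<epsilon> * Wv"
    using Wp by (simp add: field_simps power2_eq_square)
  have cs: "card (edges_between Adj B (W - B)) \<le> (\<Sum>u\<in>B. card (N u \<inter> (W - B)))"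
    using cut_sum[OF g BW W0] N_def by simp
  have split: "\<And>u. card (N u) = card (N u \<inter> (W - B)) + card (N u - (W - B))"
    using card_Int_Diff fN by blast
  have xs: "x = (\<Sum>u\<in>B. real (card (N u \<inter> (W - B)))) + (\<Sum>u\<in>B. real (card (N u - (W - B))))"
    unfolding x_def vol_def deg_def N_def[symmetric] sum.distrib[symmetric]
    by (simp add: split)
  have lo: "\<And>u. u \<in> B \<Longrightarrow> 4/9 * real (card (N u)) \<le> real (card (N u - (W - B)))"
  proof -
    fix u assume u: "u \<in> B"
    have "4/9 * real (card (N u)) \<le> real (card (N u - T))"
      using closed_out[OF g VV cV cT, of u] u W0 unfolding B_def N_def deg_def by auto
    also have "card (N u - T) \<le> card (N u - (W - B))"
      by (rule card_mono) (use fN B_def in auto)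
    finally show "4/9 * real (card (N u)) \<le> real (card (N u - (W - B)))" by simp
  qed
  have "4/9 * x = (\<Sum>u\<in>B. 4/9 * real (card (N u)))"
    unfolding x_def vol_def deg_def N_def by (simp add: sum_distrib_left)
  also have "\<dots> \<le> (\<Sum>u\<in>B. real (card (N u - (W - B))))"
    by (rule sum_mono) (rule lo)
  finally have a: "4/9 * x \<le> (\<Sum>u\<in>B. real (card (N u - (W - B))))" .
  have b: "real (card (edges_between Adj B (W - B))) \<le> (\<Sum>u\<in>B. real (card (N u \<inter> (W - B))))"
    using cs unfolding of_nat_sum[symmetric] of_nat_le_iff .
  have "4/9 * x \<le> x^2/Wv + \<epsilon> * Wv"
    by (rule fin[OF a b xs cut cutv])
  then show ?thesis unfolding x_def Wv_def B_def .
qed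



lemma close_step:
  assumes g: "simple_graph V0 Adj" and VV: "V \<subseteq> V0"
    and S_closed: "closed_in_graph Adj V S"
    and v_in: "v \<in> S"
    and v_deg: "deg Adj V v > 0"
    and v_out: "real (card (nbrs Adj V v \<inter> (V - S))) \<ge> 5/9 * real (deg Adj V v)"
  shows "closed_in_graph Adj V (S - {v})"
  unfolding closed_in_graph_def
proof (intro conjI ballI impI)
  show "S - {v} \<subseteq> V" using S_closed unfolding closed_in_graph_def by auto
  fix u assume u: "u \<in> V - (S - {v})" and du: "0 < deg Adj V u"
  have SV: "S \<subseteq> V" using S_closed unfolding closed_in_graph_def by auto
  have fN: "finite (nbrs Adj V u)" using fin_nbrs[OF g] .
  show "\<not> 5/9 * real (deg Adj V u) \<le> real (card (nbrs Adj V u \<inter> (S - {v})))"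
  proof (cases "u = v")
    case True
    have nv: "\<not> Adj v v" using g unfolding simple_graph_def by blast
    have nv: "v \<notin> nbrs Adj V v" using nv unfolding nbrs_def by simp
    have e1: "nbrs Adj V v \<inter> (S - {v}) = nbrs Adj V v \<inter> S" using nv by blast
    have e2: "nbrs Adj V v \<inter> (V - S) = nbrs Adj V v - S" unfolding nbrs_def by blast
    have c: "card (nbrs Adj V v) = card (nbrs Adj V v \<inter> S) + card (nbrs Adj V v - S)"
      using card_Int_Diff[OF fin_nbrs[OF g]] by blast
    have v2: "real (card (nbrs Adj V v - S)) \<ge> 5/9 * real (card (nbrs Adj V v))"
      using v_out unfolding e2 deg_def .
    have v3: "card (nbrs Adj V v) > 0" using v_deg unfolding deg_def .
    have "\<not> 5/9 * real (card (nbrs Adj V v)) \<le> real (card (nbrs Adj V v \<inter> S))"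
      using v2 v3 c by linarith
    then show ?thesis unfolding True e1 deg_def .
  next
    case False
    then have u2: "u \<in> V - S" using u by auto
    have "\<not> 5/9 * real (deg Adj V u) \<le> real (card (nbrs Adj V u \<inter> S))"
      using S_closed u2 du unfolding closed_in_graph_def by blast
    moreover have "card (nbrs Adj V u \<inter> (S - {v})) \<le> card (nbrs Adj V u \<inter> S)"
      by (rule card_mono) (use fN in auto)
    ultimately show ?thesis by linarith
  qed
qed



lemma fin_edges: "simple_graph V0 Adj \<Longrightarrow> finite (edges_between Adj A B)"
proof -
  assume g: "simple_graph V0 Adj"
  have fV: "finite V0" using g unfolding simple_graph_def by blast
  have "edges_between Adj A B \<subseteq> (\<lambda>(u,w). {u,w}) ` (V0 \<times> V0)"
    using g unfolding edges_between_def simple_graph_def by blast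
  moreover have "finite ((\<lambda>(u,w). {u,w}) ` (V0 \<times> V0))" using fV by simp
  ultimately show ?thesis by (rule finite_subset)
qed

lemma deg_bound:
  assumes g: "simple_graph V0 Adj" and VV: "V \<subseteq> V0"
    and cl: "spectral_cluster V0 Adj \<epsilon> W"
    and SV: "S \<subseteq> V"
    and vW: "v \<in> W" and vV: "v \<in> V"
    and v_out: "real (card (nbrs Adj V v \<inter> (V - S))) \<ge> 5/9 * real (deg Adj V v)"
  shows "5/9 * real (deg Adj V0 v) \<le> real (vol Adj V0 (W - S)) + \<epsilon> * real (vol Adj V0 W)"
proof -
  define N where "N = nbrs Adj V0 v"
  have fV: "finite V0" using g unfolding simple_graph_def by blast
  have W0: "W \<subseteq> V0" using cl unfolding spectral_cluster_def by blast
  have fW: "finite W" using finite_subset[OF W0 fV] .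
  have fN: "finite N" unfolding N_def using fin_nbrs[OF g] .
  have N0: "N \<subseteq> V0" unfolding N_def using nbrs_sub[OF g] .
  have e1: "N - S = (N \<inter> V - S) \<union> (N - V)" using SV by blast
  have c1: "card (N - S) = card (N \<inter> V - S) + card (N - V)"
    unfolding e1 by (rule card_Un_disjoint) (use fN in auto)
  have c2: "card N = card (N \<inter> V) + card (N - V)" using card_Int_Diff[OF fN] by blast
  have e2: "nbrs Adj V v \<inter> (V - S) = N \<inter> V - S" unfolding N_def nbrs_def using VV by blast
  have e3: "deg Adj V v = card (N \<inter> V)" unfolding deg_def N_def using nbrs_V[OF VV] by simp
  have a: "5/9 * real (card N) \<le> real (card (N - S))"
    using v_out unfolding e2 e3 using c1 c2 by linarith
  have e4: "N - S \<subseteq> (N \<inter> (W - S)) \<union> (N \<inter> (V0 - W))" using N0 by blast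
  have "card (N - S) \<le> card ((N \<inter> (W - S)) \<union> (N \<inter> (V0 - W)))"
    by (rule card_mono) (use fN e4 in auto)
  also have "\<dots> \<le> card (N \<inter> (W - S)) + card (N \<inter> (V0 - W))" by (rule card_Un_le)
  finally have b: "card (N - S) \<le> card (N \<inter> (W - S)) + card (N \<inter> (V0 - W))" .
  have "card (N \<inter> (W - S)) = (\<Sum>u\<in>N \<inter> (W - S). (1::nat))" by simp
  also have "\<dots> \<le> (\<Sum>u\<in>N \<inter> (W - S). deg Adj V0 u)"
  proof (rule sum_mono)
    fix u assume u: "u \<in> N \<inter> (W - S)"
    have "Adj v u" using u unfolding N_def nbrs_def by blast
    then have "Adj u v" using g unfolding simple_graph_def by blast
    then have "v \<in> nbrs Adj V0 u" using vW W0 unfolding nbrs_def by blast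
    then have "nbrs Adj V0 u \<noteq> {}" by blast
    then show "1 \<le> deg Adj V0 u" unfolding deg_def using fin_nbrs[OF g]
      by (simp add: Suc_le_eq card_gt_0_iff)
  qed
  also have "\<dots> \<le> (\<Sum>u\<in>W - S. deg Adj V0 u)"
    by (rule sum_mono2) (use fW in auto)
  finally have c: "card (N \<inter> (W - S)) \<le> vol Adj V0 (W - S)" unfolding vol_def .
  have "card (N \<inter> (V0 - W)) \<le> card (edges_between Adj W (V0 - W))"
  proof (rule card_inj_on_le[where f = "\<lambda>w. {v, w}"])
    show "inj_on (\<lambda>w. {v, w}) (N \<inter> (V0 - W))" unfolding inj_on_def by (simp add: doubleton_eq_iff)
    show "(\<lambda>w. {v, w}) ` (N \<inter> (V0 - W)) \<subseteq> edges_between Adj W (V0 - W)"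
      unfolding edges_between_def N_def nbrs_def using vW by blast
    show "finite (edges_between Adj W (V0 - W))" using fin_edges[OF g] .
  qed
  moreover have "real (card (edges_between Adj W (V0 - W))) \<le> \<epsilon> * real (vol Adj V0 W)"
    using cl unfolding spectral_cluster_def by blast
  ultimately have d: "real (card (N \<inter> (V0 - W))) \<le> \<epsilon> * real (vol Adj V0 W)" by linarith
  have "deg Adj V0 v = card N" unfolding deg_def N_def ..
  then show ?thesis using a b c d by linarith
qed



lemma arith_final:
  fixes x y d Wv e :: real
  assumes e: "0 < e" "e \<le> 1/2000000" and Wp: "Wv > 0"
    and y: "y < 3*e*Wv" and y0: "0 \<le> y" and d0: "0 \<le> d"
    and dv: "5/9 * d \<le> y + e * Wv" and x: "x = d + y"
    and dich: "4/9 * x \<le> x^2/Wv + e * Wv"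
  shows "x < 3*e*Wv"
proof (rule ccontr)
  assume "\<not> x < 3*e*Wv"
  then have xl: "3*e*Wv \<le> x" by simp
  have r1: "3*e*Wv = 3*(e*Wv)" "11*e*Wv = 11*(e*Wv)" by simp_all
  have x11: "x \<le> 11*e*Wv" using dv x y y0 r1 by linarith
  have x0: "0 \<le> x" using x y0 d0 by simp
  have "x / Wv \<le> 11*e" using x11 Wp by (simp add: divide_le_eq mult.commute mult.left_commute)
  then have "x * (x / Wv) \<le> x * (11*e)" using x0 by (rule mult_left_mono)
  moreover have "x^2/Wv = x * (x / Wv)" by (simp add: power2_eq_square)
  moreover have "x * (11*e) = 11*e*x" by simp
  ultimately have q: "x^2/Wv \<le> 11*e*x" by linarith
  have h: "x * (4/9 - 11*e) \<le> e*Wv" using dich q by (simp add: algebra_simps)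
  have pos: "0 \<le> 4/9 - 11*e" using e by simp
  have m: "3*e*Wv*(4/9-11*e) \<le> x*(4/9-11*e)" using xl pos by (rule mult_right_mono)
  have "0 < (e*Wv)*(1/3 - 33*e)" using e Wp by simp
  then have "e*Wv < 3*e*Wv*(4/9-11*e)" by (simp add: algebra_simps)
  then show False using m h by linarith
qed

lemma dom_step:
  assumes graph: "simple_graph V0 Adj"
    and eps: "0 < \<epsilon>" "\<epsilon> \<le> 1 / 2000000"
    and cluster: "spectral_cluster V0 Adj \<epsilon> W"
    and V_sub: "V \<subseteq> V0"
    and V_closed: "closed_in_graph Adj V0 V"
    and S_closed: "closed_in_graph Adj V S"
    and S_dom: "dominates V0 Adj \<epsilon> S W"
    and v_in: "v \<in> S"
    and v_deg: "deg Adj V v > 0"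
    and v_out: "real (card (nbrs Adj V v \<inter> (V - S))) \<ge> 5/9 * real (deg Adj V v)"
  shows "dominates V0 Adj \<epsilon> (S - {v}) W"
proof (cases "v \<in> W")
  case False
  then have "W \<inter> (S - {v}) = W \<inter> S" by blast
  then show ?thesis using S_dom unfolding dominates_def by simp
next
  case True
  define T where "T = S - {v}"
  have cT: "closed_in_graph Adj V T" unfolding T_def
    using close_step[OF graph V_sub S_closed v_in v_deg v_out] .
  have SV: "S \<subseteq> V" using S_closed unfolding closed_in_graph_def by blast
  have fV: "finite V0" using graph unfolding simple_graph_def by blast
  have W0: "W \<subseteq> V0" using cluster unfolding spectral_cluster_def by blast
  have Wp: "real (vol Adj V0 W) > 0" using cluster unfolding spectral_cluster_def by simp
  have fW: "finite W" using finite_subset[OF W0 fV] .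
  have split: "\<And>A. vol Adj V0 W = vol Adj V0 (W \<inter> A) + vol Adj V0 (W - A)"
    unfolding vol_def by (rule sum.Int_Diff[OF fW])
  have y: "real (vol Adj V0 (W - S)) < 3*\<epsilon>*real (vol Adj V0 W)"
    using S_dom split[of S] unfolding dominates_def by (simp add: algebra_simps)
  have ins: "W - T = insert v (W - S)" using True v_in unfolding T_def by blast
  have fWS: "finite (W - S)" using fW by simp
  have vn: "v \<notin> W - S" using v_in by blast
  have x: "vol Adj V0 (W - T) = deg Adj V0 v + vol Adj V0 (W - S)"
    unfolding ins vol_def using sum.insert[OF fWS vn] by simp
  have dv: "5/9 * real (deg Adj V0 v) \<le> real (vol Adj V0 (W - S)) + \<epsilon> * real (vol Adj V0 W)"
    using deg_bound[OF graph V_sub cluster SV True] v_in SV v_out by blast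
  have dich: "4/9 * real (vol Adj V0 (W - T)) \<le> real (vol Adj V0 (W - T))^2 / real (vol Adj V0 W) + \<epsilon> * real (vol Adj V0 W)"
    using dichotomy[OF graph V_sub V_closed cT cluster] .
  have "real (vol Adj V0 (W - T)) < 3*\<epsilon>*real (vol Adj V0 W)"
    by (rule arith_final[OF eps Wp y _ _ dv _ dich]) (use x in auto)
  then have "real (vol Adj V0 (W \<inter> T)) > (1 - 3*\<epsilon>) * real (vol Adj V0 W)"
    using split[of T] by (simp add: algebra_simps)
  then show ?thesis unfolding dominates_def T_def .
qed


theorem mainTheorem11:
  fixes V0 V S W :: "'a set" and Adj :: "'a \<Rightarrow> 'a \<Rightarrow> bool" and \<epsilon> :: real and v :: 'a
  assumes graph: "simple_graph V0 Adj"
    and eps: "0 < \<epsilon>" "\<epsilon> \<le> 1 / 2000000"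
    and cluster: "spectral_cluster V0 Adj \<epsilon> W"
    and V_sub: "V \<subseteq> V0"
    and V_closed: "closed_in_graph Adj V0 V"
    and S_closed: "closed_in_graph Adj V S"
    and S_dom: "dominates V0 Adj \<epsilon> S W"
    and v_in: "v \<in> S"
    and v_deg: "deg Adj V v > 0"
    and v_out: "real (card (nbrs Adj V v \<inter> (V - S))) \<ge> 5/9 * real (deg Adj V v)"
  shows "closed_in_graph Adj V (S - {v}) \<and> dominates V0 Adj \<epsilon> (S - {v}) W
    \<and> (\<forall>S'. (improve_move Adj V)\<^sup>*\<^sup>* S S' \<longrightarrow>
           closed_in_graph Adj V S' \<and> dominates V0 Adj \<epsilon> S' W)"
proof (intro conjI allI impI)
  show "closed_in_graph Adj V (S - {v})"
    using close_step[OF graph V_sub S_closed v_in v_deg v_out] .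
  show "dominates V0 Adj \<epsilon> (S - {v}) W"
    using dom_step[OF graph eps cluster V_sub V_closed S_closed S_dom v_in v_deg v_out] .
next
  fix S' assume "(improve_move Adj V)\<^sup>*\<^sup>* S S'"
  then have "closed_in_graph Adj V S' \<and> dominates V0 Adj \<epsilon> S' W"
  proof (induction rule: rtranclp_induct)
    case base
    then show ?case using S_closed S_dom by blast
  next
    case (step y z)
    from step.hyps(2) obtain u where u: "u \<in> y" "deg Adj V u > 0"
      "real (card (nbrs Adj V u \<inter> (V - y))) \<ge> 5/9 * real (deg Adj V u)" and z: "z = y - {u}"
      unfolding improve_move_def by blast
    have cy: "closed_in_graph Adj V y" and dy: "dominates V0 Adj \<epsilon> y W" using step.IH by blast+
    show ?case unfolding z
      using close_step[OF graph V_sub cy u] dom_step[OF graph eps cluster V_sub V_closed cy dy u] by blast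
  qed
  then show "closed_in_graph Adj V S'" "dominates V0 Adj \<epsilon> S' W" by blast+
qed

end
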